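(* For the iterates of SONATA with step-size $\alpha\in(0,1]$ under Assumptions (A), (B), (C), (W), for all $\nu\ge0$: $$\|x_\perp^{\nu+1}\|\le\rho\|x_\perp^\nu\|+\alpha\rho\|d^\nu\|,\qquad \|y_\perp^{\nu+1}\|\le\rho\|y_\perp^\nu\|+2L_{\max}\rho\|x_\perp^\nu\|+\alpha L_{\max}\rho\|d^\nu\|.$$
   Context: Problem (P): minimize $U=F+G$ over $\mathcal K$, $F=\frac1m\sum_{i=1}^mf_i$. (A): $\mathcal K\subseteq\mathbb R^d$ nonempty closed convex; $f_i$ twice differentiable convex on open $\mathcal O\supseteq\mathcal K$; $\mu I\preceq\nabla^2F\preceq LI$ on $\mathcal K$ ($\mu>0$); $G$ convex on $\mathcal K$. $\nabla^2f_i\preceq L_iI$ on $\mathcal K$, $L_{\max}=\max_iL_i$. (B): connected undirected graph on $\{1,\dots,m\}$, edges $\mathcal E$. (W): $w_{ii}>0$; for $i\neq j$, $w_{ij}>0$ iff $(i,j)\in\mathcal E$, else 0; $W$ doubly stochastic; $\rho$ = largest singular value of $W\otimes I_d-\frac1m\mathbf1\mathbf1^\top\otimes I_d$. (C): $\tilde f_i:\mathcal O\times\mathcal O\to\mathbb R$ $C^2$, $\nabla\tilde f_i(x;x)=\nabla f_i(x)$, $\nabla\tilde f_i(\cdot;x)$ Lipschitz, $\tilde f_i(\cdot;x)$ strongly convex on $\mathcal K$ for all $x\in\mathcal K$. SONATA: $x_i^0\in\mathcal K$, $y_i^0=\nabla f_i(x_i^0)$; $\hat x_i^\nu=\arg\min_{x_i\in\mathcal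 K}\tilde f_i(x_i;x_i^\nu)+(y_i^\nu-\nabla f_i(x_i^\nu))^\top(x_i-x_i^\nu)+G(x_i)$; $d_i^\nu=\hat x_i^\nu-x_i^\nu$; $x_i^{\nu+1/2}=x_i^\nu+\alpha d_i^\nu$; $x_i^{\nu+1}=\sum_jw_{ij}x_j^{\nu+1/2}$; $y_i^{\nu+1}=\sum_jw_{ij}(y_j^\nu+\nabla f_j(x_j^{\nu+1})-\nabla f_j(x_j^\nu))$. $x^\nu,y^\nu,d^\nu\in\mathbb R^{md}$ stack the local vectors; $x_\perp^\nu=x^\nu-\mathbf1_m\otimes\frac1m\sum_ix_i^\nu$, $y_\perp^\nu=y^\nu-\mathbf1_m\otimes\frac1m\sum_iy_i^\nu$. *)

theory Defs
  imports "HOL-Analysis.Analysis"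
begin

definition strongly_convex_on :: "'a::real_normed_vector set \<Rightarrow> ('a \<Rightarrow> real) \<Rightarrow> bool" where
  "strongly_convex_on S f \<longleftrightarrow> (\<exists>c>0. \<forall>x\<in>S. \<forall>y\<in>S. \<forall>t::real. 0 \<le> t \<and> t \<le> 1 \<longrightarrow>
      f (t *\<^sub>R x + (1 - t) *\<^sub>R y) \<le> t * f x + (1 - t) * f y - c / 2 * t * (1 - t) * (norm (x - y))\<^sup>2)"

definition C2_on :: "('a::euclidean_space \<Rightarrow> real) \<Rightarrow> 'a set \<Rightarrow> bool" where
  "C2_on f S \<longleftrightarrow> (\<exists>(f' :: 'a \<Rightarrow> 'a \<Rightarrow>\<^sub>L real) (f'' :: 'a \<Rightarrow> 'a \<Rightarrow>\<^sub>L ('a \<Rightarrow>\<^sub>L real)).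
      (\<forall>x\<in>S. (f has_derivative blinfun_apply (f' x)) (at x) \<and>
              (f' has_derivative blinfun_apply (f'' x)) (at x)) \<and> continuous_on S f'')"

text \<open>Stacked vectors: an element of real^'d^'m is (x_1,...,x_m), each x_i in R^d;
  its norm is the Euclidean norm of the stacked vector in R^(md).\<close>

definition stack_avg :: "real^'d^'m \<Rightarrow> real^'d" where
  "stack_avg X = (1 / real CARD('m)) *\<^sub>R (\<Sum>i\<in>UNIV. X $ i)"

definition perp :: "real^'d^'m \<Rightarrow> real^'d^'m" where
  "perp X = (\<chi> i. X $ i - stack_avg X)"

text \<open>The linear map (W \<otimes> I_d - (1/m) 1 1^T \<otimes> I_d) acting on stacked vectors.\<close>
definition consensus_map :: "real^'m^'m \<Rightarrow> real^'d^'m \<Rightarrow> real^'d^'m" where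
  "consensus_map W X = (\<chi> i. \<Sum>j\<in>UNIV. (W $ i $ j - 1 / real CARD('m)) *\<^sub>R X $ j)"

definition largest_singular_value :: "('a::euclidean_space \<Rightarrow> 'b::euclidean_space) \<Rightarrow> real" where
  "largest_singular_value A = onorm A"

end

theory Submission
  imports Defs
begin

lemma le_eps:
  fixes a b c :: real
  assumes "\<And>e. e > 0 \<Longrightarrow> a \<le> b + e * c"
  shows "a \<le> b"
proof (rule ccontr)
  assume "\<not> a \<le> b"
  then have ab: "a - b > 0" by simp
  show False
  proof (cases "c > 0")
    case True
    have "a \<le> b + ((a - b) / (2 * c)) * c" using assms[of "(a - b) / (2 * c)"] ab True by simp
    also have "\<dots> = b + (a - b) / 2" using True by (simp add: field_simps)
    finally show False using ab by (simp add: field_simps)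
  next
    case False
    have "a \<le> b + 1 * c" using assms[of 1] by simp
    then show False using False ab by simp
  qed
qed

lemma tangent_ineq:
  fixes f :: "'a::real_inner \<Rightarrow> real"
  assumes cv: "convex_on S f" and ga: "(f has_derivative (\<lambda>h. g \<bullet> h)) (at a)"
    and a: "a \<in> S" and b: "b \<in> S"
  shows "g \<bullet> (b - a) \<le> f b - f a"
proof (rule le_eps[where c = "norm (b - a)"])
  fix e :: real assume e: "e > 0"
  obtain d where d: "d > 0" and dd: "\<And>y. norm (y - a) < d \<Longrightarrow>
      norm (f y - f a - g \<bullet> (y - a)) \<le> e * norm (y - a)"
    using ga e unfolding has_derivative_at_alt by blast
  define t where "t = min 1 (d / (2 * (norm (b - a) + 1)))"
  have dpos: "2 * (norm (b - a) + 1) > 0" by (simp add: add_nonneg_pos)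
  have t0: "t > 0" using d dpos by (simp add: t_def)
  have t1: "t \<le> 1" by (simp add: t_def)
  have "t * norm (b - a) < d"
  proof -
    have "t * norm (b - a) \<le> (d / (2 * (norm (b - a) + 1))) * norm (b - a)"
      by (intro mult_right_mono) (auto simp: t_def)
    also have "\<dots> < d"
    proof -
      have "d * norm (b - a) < d * (2 * (norm (b - a) + 1))" using d by (simp add: add_nonneg_pos)
      then show ?thesis using dpos by (simp add: divide_less_eq)
    qed
    finally show ?thesis .
  qed
  then have nr: "norm ((a + t *\<^sub>R (b - a)) - a) < d" using t0 by simp
  have cvx: "f ((1 - t) *\<^sub>R a + t *\<^sub>R b) \<le> (1 - t) * f a + t * f b"
    using convex_onD[OF cv, of t a b] t0 t1 a b by simp
  have eqp: "(1 - t) *\<^sub>R a + t *\<^sub>R b = a + t *\<^sub>R (b - a)" by (simp add: algebra_simps)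
  have "norm (f (a + t *\<^sub>R (b - a)) - f a - g \<bullet> (t *\<^sub>R (b - a))) \<le> e * norm (t *\<^sub>R (b - a))"
    using dd[OF nr] by simp
  then have "t * (g \<bullet> (b - a)) \<le> f (a + t *\<^sub>R (b - a)) - f a + e * (t * norm (b - a))"
    using t0 by (auto simp: abs_le_iff)
  also have "\<dots> \<le> t * (f b - f a) + e * (t * norm (b - a))"
    using cvx eqp by (simp add: algebra_simps)
  finally have "t * (g \<bullet> (b - a)) \<le> t * (f b - f a + e * norm (b - a))" by (simp add: algebra_simps)
  then show "g \<bullet> (b - a) \<le> f b - f a + e * norm (b - a)" using t0 by simp
qed


lemma small_t:
  fixes d n :: real
  assumes "d > 0" "n \<ge> 0"
  obtains t where "t > 0" "t * n < d"
proof -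
  define t where "t = d / (2 * (n + 1))"
  have p: "2 * (n + 1) > 0" using assms by simp
  have "t > 0" using assms p by (simp add: t_def)
  moreover have "t * n < d"
  proof -
    have "d * n < d * (2 * (n + 1))" using assms by simp
    then show ?thesis using p by (simp add: t_def divide_less_eq)
  qed
  ultimately show ?thesis using that by blast
qed

lemma hess_psd:
  fixes f :: "'a::real_inner \<Rightarrow> real"
  assumes cv: "convex_on S f" and S: "open S" and z: "z \<in> S"
    and grad: "\<And>w. w \<in> S \<Longrightarrow> (f has_derivative (\<lambda>h. g w \<bullet> h)) (at w)"
    and hd: "(g has_derivative H) (at z)"
  shows "0 \<le> v \<bullet> H v"
proof (rule le_eps[where c = "norm v * norm v"])
  fix e :: real assume e: "e > 0"
  have bl: "bounded_linear H" using hd by (rule has_derivative_bounded_linear)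
  obtain d where d: "d > 0" and dd: "\<And>y. norm (y - z) < d \<Longrightarrow>
      norm (g y - g z - H (y - z)) \<le> e * norm (y - z)"
    using hd e unfolding has_derivative_at_alt by blast
  obtain r where r: "r > 0" "ball z r \<subseteq> S" using S z open_contains_ball by blast
  obtain t where t: "t > 0" "t * norm v < min d r" using small_t[of "min d r" "norm v"] d r by auto
  define w where "w = z + t *\<^sub>R v"
  have nw: "norm (w - z) = t * norm v" using t by (simp add: w_def)
  have wS: "w \<in> S" using r t nw by (auto simp: dist_norm norm_minus_commute intro!: subsetD[OF r(2)])
  have t1: "g z \<bullet> (w - z) \<le> f w - f z" by (rule tangent_ineq[OF cv grad[OF z] z wS])
  have t2: "g w \<bullet> (z - w) \<le> f z - f w" by (rule tangent_ineq[OF cv grad[OF wS] wS z])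
  have "0 \<le> (g w - g z) \<bullet> (w - z)" using t1 t2 by (simp add: inner_diff_left inner_diff_right algebra_simps)
  then have m: "0 \<le> (g w - g z) \<bullet> v" using t by (simp add: w_def zero_le_mult_iff)
  define R where "R = g w - g z - H (w - z)"
  have Rn: "norm R \<le> e * (t * norm v)" using dd[of w] nw t by (simp add: R_def)
  have Hw: "H (w - z) = t *\<^sub>R H v" by (simp add: w_def linear_cmul[OF bounded_linear.linear[OF bl]])
  have "(g w - g z) \<bullet> v = t * (v \<bullet> H v) + R \<bullet> v" by (simp add: R_def Hw inner_diff_left inner_diff_right inner_commute)
  also have "R \<bullet> v \<le> norm R * norm v" by (rule norm_cauchy_schwarz)
  also have "norm R * norm v \<le> e * (t * norm v) * norm v" by (rule mult_right_mono[OF Rn]) simp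
  finally have "0 \<le> t * (v \<bullet> H v + e * (norm v * norm v))" using m by (simp add: algebra_simps)
  then show "0 \<le> v \<bullet> H v + e * (norm v * norm v)" using t by (simp add: zero_le_mult_iff)
qed


lemma hess_sym:
  fixes f :: "'a::real_inner \<Rightarrow> real"
  assumes S: "open S" and z: "z \<in> S"
    and grad: "\<And>w. w \<in> S \<Longrightarrow> (f has_derivative (\<lambda>h. g w \<bullet> h)) (at w)"
    and hd: "(g has_derivative H) (at z)"
  shows "u \<bullet> H v = v \<bullet> H u"
proof -
  have bl: "bounded_linear H" using hd by (rule has_derivative_bounded_linear)
  have lin: "linear H" using bl by (rule bounded_linear.linear)
  define C where "C = (norm u + 2 * norm v) * norm v + (norm v + 2 * norm u) * norm u"
  have "\<bar>u \<bullet> H v - v \<bullet> H u\<bar> \<le> 0"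
  proof (rule le_eps[where c = C])
    fix e :: real assume e: "e > 0"
    obtain d where d: "d > 0" and dd: "\<And>y. norm (y - z) < d \<Longrightarrow>
        norm (g y - g z - H (y - z)) \<le> e * norm (y - z)"
      using hd e unfolding has_derivative_at_alt by blast
    obtain r where r: "r > 0" "ball z r \<subseteq> S" using S z open_contains_ball by blast
    obtain t where t: "t > 0" "t * (norm u + norm v) < min d r"
      using small_t[of "min d r" "norm u + norm v"] d r by auto
    have key: "\<bar>f (z + t *\<^sub>R p + t *\<^sub>R q) - f (z + t *\<^sub>R q) - f (z + t *\<^sub>R p) + f z - t * t * (q \<bullet> H p)\<bar>
        \<le> e * (t * t) * ((norm p + 2 * norm q) * norm q)"
      if pq: "t * (norm p + norm q) < min d r" for p q
    proof -
      define \<phi> where "\<phi> s = f (z + t *\<^sub>R p + s *\<^sub>R q) - f (z + s *\<^sub>R q)" for s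
      define \<phi>' where "\<phi>' s = (\<lambda>h. h * ((g (z + t *\<^sub>R p + s *\<^sub>R q) - g (z + s *\<^sub>R q)) \<bullet> q))" for s
      have inball: "z + t *\<^sub>R p + s *\<^sub>R q \<in> S \<and> z + s *\<^sub>R q \<in> S \<and>
          norm (t *\<^sub>R p + s *\<^sub>R q) \<le> t * (norm p + norm q) \<and> norm (s *\<^sub>R q) \<le> t * norm q"
        if s: "0 \<le> s" "s \<le> t" for s
      proof -
        have n1: "norm (t *\<^sub>R p + s *\<^sub>R q) \<le> t * (norm p + norm q)"
        proof -
          have "norm (t *\<^sub>R p + s *\<^sub>R q) \<le> norm (t *\<^sub>R p) + norm (s *\<^sub>R q)" by (rule norm_triangle_ineq)
          also have "\<dots> = t * norm p + s * norm q" using s t by simp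
          also have "\<dots> \<le> t * norm p + t * norm q" using s by (simp add: mult_right_mono)
          finally show ?thesis by (simp add: algebra_simps)
        qed
        have n2: "norm (s *\<^sub>R q) \<le> t * norm q" using s by (simp add: mult_right_mono)
        have "t * norm q \<le> t * (norm p + norm q)" using t by simp
        have b1: "dist z (z + t *\<^sub>R p + s *\<^sub>R q) = norm (t *\<^sub>R p + s *\<^sub>R q)"
          by (metis add.assoc add_diff_cancel_left' dist_norm dist_commute)
        have b2: "dist z (z + s *\<^sub>R q) = norm (s *\<^sub>R q)"
          by (metis add_diff_cancel_left' dist_norm dist_commute)
        have "t * norm q \<le> t * (norm p + norm q)" using t by simp
        then have "z + t *\<^sub>R p + s *\<^sub>R q \<in> ball z r" "z + s *\<^sub>R q \<in> ball z r"
          using n1 n2 pq b1 b2 by auto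
        then show ?thesis using r n1 n2 by auto
      qed
      have der: "(\<phi> has_derivative \<phi>' s) (at s within {0..t})" if s: "0 \<le> s" "s \<le> t" for s
      proof -
        have l1: "((\<lambda>s. z + t *\<^sub>R p + s *\<^sub>R q) has_derivative (\<lambda>h. h *\<^sub>R q)) (at s)"
          by (auto intro!: derivative_eq_intros)
        have l2: "((\<lambda>s. z + s *\<^sub>R q) has_derivative (\<lambda>h. h *\<^sub>R q)) (at s)"
          by (auto intro!: derivative_eq_intros)
        have c1: "((\<lambda>s. f (z + t *\<^sub>R p + s *\<^sub>R q)) has_derivative
            (\<lambda>h. g (z + t *\<^sub>R p + s *\<^sub>R q) \<bullet> (h *\<^sub>R q))) (at s)"
          using has_derivative_compose[OF l1 grad] inball[OF s] by (simp add: o_def)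
        have c2: "((\<lambda>s. f (z + s *\<^sub>R q)) has_derivative
            (\<lambda>h. g (z + s *\<^sub>R q) \<bullet> (h *\<^sub>R q))) (at s)"
          using has_derivative_compose[OF l2 grad] inball[OF s] by (simp add: o_def)
        have "(\<phi> has_derivative \<phi>' s) (at s)"
          unfolding \<phi>_def[abs_def] \<phi>'_def
          using has_derivative_diff[OF c1 c2] by (simp add: inner_diff_left algebra_simps)
        then show ?thesis by (rule has_derivative_at_withinI)
      qed
      obtain \<xi> where xi: "\<xi> \<in> {0<..<t}" and mv: "\<phi> t - \<phi> 0 = \<phi>' \<xi> (t - 0)"
        using mvt_simple[OF t(1) der] by auto
      have xi': "0 \<le> \<xi>" "\<xi> \<le> t" using xi by auto
      note ib = inball[OF xi']
      define R1 where "R1 = g (z + t *\<^sub>R p + \<xi> *\<^sub>R q) - g z - H (t *\<^sub>R p + \<xi> *\<^sub>R q)"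
      define R2 where "R2 = g (z + \<xi> *\<^sub>R q) - g z - H (\<xi> *\<^sub>R q)"
      have "norm ((z + t *\<^sub>R p + \<xi> *\<^sub>R q) - z) < d" using ib pq by (simp add: add.assoc)
      then have R1n: "norm R1 \<le> e * (t * (norm p + norm q))"
        using dd[of "z + t *\<^sub>R p + \<xi> *\<^sub>R q"] ib e unfolding R1_def
        by (simp add: add.assoc) (meson mult_left_mono less_imp_le order_trans)
      have "t * norm q \<le> t * (norm p + norm q)" using t by simp
      then have "norm ((z + \<xi> *\<^sub>R q) - z) < d" using ib pq by simp
      then have R2n: "norm R2 \<le> e * (t * norm q)"
        using dd[of "z + \<xi> *\<^sub>R q"] ib e unfolding R2_def
        by simp (meson mult_left_mono less_imp_le order_trans)
      have gd: "g (z + t *\<^sub>R p + \<xi> *\<^sub>R q) - g (z + \<xi> *\<^sub>R q) = t *\<^sub>R H p + (R1 - R2)"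
        unfolding R1_def R2_def using linear_add[OF lin] linear_cmul[OF lin] by (simp add: algebra_simps)
      have "\<phi> t - \<phi> 0 = t * (t * (q \<bullet> H p) + (R1 - R2) \<bullet> q)"
        using mv by (simp add: \<phi>'_def gd inner_add_left inner_add_right inner_commute)
      moreover have "\<phi> t - \<phi> 0 = f (z + t *\<^sub>R p + t *\<^sub>R q) - f (z + t *\<^sub>R q) - f (z + t *\<^sub>R p) + f z"
        by (simp add: \<phi>_def)
      moreover have "\<bar>(R1 - R2) \<bullet> q\<bar> \<le> e * t * ((norm p + 2 * norm q) * norm q)"
      proof -
        have "\<bar>(R1 - R2) \<bullet> q\<bar> \<le> norm (R1 - R2) * norm q" by (rule Cauchy_Schwarz_ineq2)
        also have "\<dots> \<le> (norm R1 + norm R2) * norm q" by (simp add: mult_right_mono norm_triangle_ineq4)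
        also have "\<dots> \<le> (e * (t * (norm p + norm q)) + e * (t * norm q)) * norm q"
          using R1n R2n by (simp add: mult_right_mono)
        finally show ?thesis by (simp add: algebra_simps)
      qed
      ultimately have "f (z + t *\<^sub>R p + t *\<^sub>R q) - f (z + t *\<^sub>R q) - f (z + t *\<^sub>R p) + f z - t * t * (q \<bullet> H p)
          = t * ((R1 - R2) \<bullet> q)" and ab: "\<bar>(R1 - R2) \<bullet> q\<bar> \<le> e * t * ((norm p + 2 * norm q) * norm q)"
        by (simp_all add: algebra_simps)
      moreover have "\<bar>t * ((R1 - R2) \<bullet> q)\<bar> \<le> t * (e * t * ((norm p + 2 * norm q) * norm q))"
        using ab t by (simp add: abs_mult mult_left_mono)
      ultimately show ?thesis by (simp add: algebra_simps)
    qed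
    have k1: "\<bar>f (z + t *\<^sub>R u + t *\<^sub>R v) - f (z + t *\<^sub>R v) - f (z + t *\<^sub>R u) + f z - t * t * (v \<bullet> H u)\<bar>
        \<le> e * (t * t) * ((norm u + 2 * norm v) * norm v)"
      using key[of u v] t by simp
    have k2: "\<bar>f (z + t *\<^sub>R v + t *\<^sub>R u) - f (z + t *\<^sub>R u) - f (z + t *\<^sub>R v) + f z - t * t * (u \<bullet> H v)\<bar>
        \<le> e * (t * t) * ((norm v + 2 * norm u) * norm u)"
      using key[of v u] t by (simp add: add.commute)
    have eqz: "z + t *\<^sub>R v + t *\<^sub>R u = z + t *\<^sub>R u + t *\<^sub>R v" by (simp add: algebra_simps)
    have gen: "T * \<bar>y - x\<bar> \<le> a + b" if "\<bar>D - T * x\<bar> \<le> a" "\<bar>D - T * y\<bar> \<le> b" "T > 0"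
      for D T x y a b :: real
    proof -
      have "T * \<bar>y - x\<bar> = \<bar>(D - T * x) - (D - T * y)\<bar>" proof -
        have "T * \<bar>y - x\<bar> = \<bar>T * (y - x)\<bar>" using that(3) by (simp add: abs_mult)
        then show ?thesis by (simp add: algebra_simps)
      qed
      also have "\<dots> \<le> \<bar>D - T * x\<bar> + \<bar>D - T * y\<bar>" by (rule abs_triangle_ineq4)
      finally show ?thesis using that by linarith
    qed
    have "(t * t) * \<bar>u \<bullet> H v - v \<bullet> H u\<bar> \<le> e * (t * t) * ((norm u + 2 * norm v) * norm v) + e * (t * t) * ((norm v + 2 * norm u) * norm u)"
    proof (rule gen[OF k1])
      show "\<bar>f (z + t *\<^sub>R u + t *\<^sub>R v) - f (z + t *\<^sub>R v) - f (z + t *\<^sub>R u) + f z - t * t * (u \<bullet> H v)\<bar>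
        \<le> e * (t * t) * ((norm v + 2 * norm u) * norm u)"
        using k2[unfolded eqz] by (simp add: algebra_simps)
    qed (use t in simp)
    also have "\<dots> = (t * t) * (e * C)" by (simp add: C_def algebra_simps)
    finally have "(t * t) * \<bar>u \<bullet> H v - v \<bullet> H u\<bar> \<le> (t * t) * (e * C)" .
    then show "\<bar>u \<bullet> H v - v \<bullet> H u\<bar> \<le> 0 + e * C" using t by simp
  qed
  then show ?thesis by simp
qed


lemma psd_norm_bound:
  fixes H :: "'a::real_inner \<Rightarrow> 'a"
  assumes lin: "linear H"
    and sym: "\<And>u v. u \<bullet> H v = v \<bullet> H u"
    and psd: "\<And>v. 0 \<le> v \<bullet> H v"
    and up: "\<And>v. v \<bullet> H v \<le> L * (v \<bullet> v)"
  shows "norm (H v) \<le> L * norm v"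
proof (cases "H v = 0")
  case True
  show ?thesis
  proof (cases "v = 0")
    case False
    have "0 \<le> L * (v \<bullet> v)" using psd[of v] up[of v] by linarith
    moreover have "v \<bullet> v > 0" using False by simp
    ultimately have "0 \<le> L" by (simp add: zero_le_mult_iff)
    then show ?thesis using True by simp
  qed (use True in simp)
next
  case False
  have v0: "v \<noteq> 0" using False linear_0[OF lin] by auto
  have nH: "norm (H v) > 0" using False by simp
  define u where "u = (norm v / norm (H v)) *\<^sub>R H v"
  have nu: "norm u = norm v" using nH by (simp add: u_def)
  have uHv: "u \<bullet> H v = norm v * norm (H v)"
    using nH by (simp add: u_def power2_norm_eq_inner[symmetric] power2_eq_square)
  have pol: "(u + v) \<bullet> H (u + v) - (u - v) \<bullet> H (u - v) = 4 * (u \<bullet> H v)"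
    using sym[of u v] by (simp add: linear_add[OF lin] linear_diff[OF lin] inner_add_left inner_add_right
        inner_diff_left inner_diff_right)
  have "4 * (u \<bullet> H v) \<le> L * ((u + v) \<bullet> (u + v))"
    using pol up[of "u + v"] psd[of "u - v"] by linarith
  also have "(u + v) \<bullet> (u + v) \<le> 4 * (norm v * norm v)"
  proof -
    have "(u + v) \<bullet> (u + v) = (norm (u + v))^2" by (simp add: power2_norm_eq_inner)
    also have "\<dots> \<le> (norm u + norm v)^2" by (simp add: norm_triangle_ineq power_mono)
    finally show ?thesis using nu by (simp add: power2_eq_square)
  qed
  then have "L * ((u + v) \<bullet> (u + v)) \<le> L * (4 * (norm v * norm v))" if "L \<ge> 0"
    using that by (simp add: mult_left_mono)
  moreover have "L \<ge> 0"
  proof -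
    have "0 \<le> L * (v \<bullet> v)" using psd[of v] up[of v] by linarith
    moreover have "v \<bullet> v > 0" using v0 by simp
    ultimately show ?thesis by (simp add: zero_le_mult_iff)
  qed
  ultimately have "4 * (norm v * norm (H v)) \<le> 4 * (L * norm v * norm v)"
    using \<open>4 * (u \<bullet> H v) \<le> L * ((u + v) \<bullet> (u + v))\<close> uHv by (simp add: algebra_simps)
  then have "norm v * norm (H v) \<le> norm v * (L * norm v)" by (simp add: algebra_simps)
  then show ?thesis using v0 by simp
qed

lemma hess_onorm:
  fixes f :: "'a::{real_inner,perfect_space} \<Rightarrow> real"
  assumes cv: "convex_on S f" and S: "open S" and z: "z \<in> S"
    and grad: "\<And>w. w \<in> S \<Longrightarrow> (f has_derivative (\<lambda>h. g w \<bullet> h)) (at w)"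
    and hd: "(g has_derivative H) (at z)"
    and up: "\<And>v. v \<bullet> H v \<le> L * (v \<bullet> v)"
  shows "onorm H \<le> L"
proof (rule onorm_le)
  fix v
  have lin: "linear H" using hd by (simp add: has_derivative_linear)
  show "norm (H v) \<le> L * norm v"
    by (rule psd_norm_bound[OF lin hess_sym[OF S z grad hd] hess_psd[OF cv S z grad hd] up])
qed


definition Wm :: "real^'m^'m \<Rightarrow> real^'d^'m \<Rightarrow> real^'d^'m" where
  "Wm W X = (\<chi> i. \<Sum>j\<in>UNIV. W $ i $ j *\<^sub>R X $ j)"

lemma norm_sq_vec: "(norm (X :: 'a::real_normed_vector^'n))^2 = (\<Sum>i\<in>UNIV. (norm (X $ i))^2)"
  by (simp add: norm_vec_def L2_set_def sum_nonneg)

lemma norm_vec_comp_le: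
  fixes A :: "'a::real_normed_vector^'n" and B :: "'b::real_normed_vector^'n"
  assumes "\<And>i. norm (A $ i) \<le> c * norm (B $ i)" "c \<ge> 0"
  shows "norm A \<le> c * norm B"
proof (rule power2_le_imp_le)
  have "(norm A)^2 = (\<Sum>i\<in>UNIV. (norm (A $ i))^2)" by (rule norm_sq_vec)
  also have "\<dots> \<le> (\<Sum>i\<in>UNIV. (c * norm (B $ i))^2)"
    by (intro sum_mono power_mono assms) simp
  also have "\<dots> = c^2 * (norm B)^2" by (simp add: norm_sq_vec power_mult_distrib sum_distrib_left)
  finally show "(norm A)^2 \<le> (c * norm B)^2" by (simp add: power_mult_distrib)
  show "0 \<le> c * norm B" using assms by simp
qed

lemma linear_consensus: "linear (consensus_map W :: real^'d^'m \<Rightarrow> real^'d^'m)"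
  by (rule linearI) (simp_all add: consensus_map_def vec_eq_iff scaleR_add_right sum.distrib scaleR_sum_right mult_ac)

lemma bl_consensus: "bounded_linear (consensus_map W :: real^'d^'m \<Rightarrow> real^'d^'m)"
  using linear_conv_bounded_linear linear_consensus by blast

lemma consensus_norm:
  "norm (consensus_map W X) \<le> largest_singular_value (consensus_map W :: real^'d^'m \<Rightarrow> real^'d^'m) * norm (X :: real^'d^'m)"
  unfolding largest_singular_value_def by (rule onorm[OF bl_consensus])

lemma rho_nonneg: "0 \<le> largest_singular_value (consensus_map W :: real^'d^'m \<Rightarrow> real^'d^'m)"
  unfolding largest_singular_value_def by (rule onorm_pos_le[OF bl_consensus])

lemma linear_Wm: "linear (Wm W :: real^'d^'m \<Rightarrow> real^'d^'m)"
  by (rule linearI) (simp_all add: Wm_def vec_eq_iff scaleR_add_right sum.distrib scaleR_sum_right mult_ac)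

lemma consensus_perp:
  fixes X :: "real^'d^'m"
  assumes row: "\<And>i. (\<Sum>j\<in>UNIV. W $ i $ j) = 1"
  shows "consensus_map W (perp X) = consensus_map W X"
proof -
  have "(\<Sum>j\<in>UNIV. (W $ i $ j - 1 / real CARD('m)) *\<^sub>R (X $ j - stack_avg X))
      = (\<Sum>j\<in>UNIV. (W $ i $ j - 1 / real CARD('m)) *\<^sub>R X $ j)" for i
  proof -
    have s0: "(\<Sum>j\<in>UNIV. (W $ i $ j - 1 / real CARD('m))) = 0"
      using row[of i] by (simp add: sum_subtractf)
    have "(\<Sum>j\<in>UNIV. (W $ i $ j - 1 / real CARD('m)) *\<^sub>R (X $ j - stack_avg X))
       = (\<Sum>j\<in>UNIV. (W $ i $ j - 1 / real CARD('m)) *\<^sub>R X $ j) - (\<Sum>j\<in>UNIV. (W $ i $ j - 1 / real CARD('m))) *\<^sub>R stack_avg X"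
      by (simp add: scaleR_diff_right sum_subtractf scaleR_sum_left[symmetric])
    then show ?thesis using s0 by simp
  qed
  then show ?thesis by (simp add: consensus_map_def perp_def vec_eq_iff)
qed

lemma perp_Wm:
  fixes X :: "real^'d^'m"
  assumes col: "\<And>j. (\<Sum>i\<in>UNIV. W $ i $ j) = 1"
  shows "perp (Wm W X) = consensus_map W X"
proof -
  have avg: "stack_avg (Wm W X) = stack_avg X"
  proof -
    have "(\<Sum>i\<in>UNIV. Wm W X $ i) = (\<Sum>i\<in>UNIV. \<Sum>j\<in>UNIV. W $ i $ j *\<^sub>R X $ j)" by (simp add: Wm_def)
    also have "\<dots> = (\<Sum>j\<in>UNIV. \<Sum>i\<in>UNIV. W $ i $ j *\<^sub>R X $ j)" by (rule sum.swap)
    also have "\<dots> = (\<Sum>j\<in>UNIV. X $ j)" by (simp add: scaleR_sum_left[symmetric] col)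
    finally show ?thesis by (simp add: stack_avg_def)
  qed
  have key: "(\<Sum>j\<in>UNIV. (W $ i $ j - 1 / real CARD('m)) *\<^sub>R X $ j) = Wm W X $ i - stack_avg X" for i
    by (simp add: Wm_def stack_avg_def scaleR_diff_left sum_subtractf scaleR_sum_right)
  show ?thesis unfolding perp_def consensus_map_def avg
    by (rule arg_cong[where f=vec_lambda], rule ext) (simp add: key)
qed

lemma Wm_const:
  assumes row: "\<And>i. (\<Sum>j\<in>UNIV. W $ i $ j) = 1"
  shows "Wm W ((\<chi> i. a) :: real^'d^'m) = (\<chi> i. a)"
  by (simp add: Wm_def vec_eq_iff scaleR_sum_left[symmetric] row)

lemma Wm_norm:
  fixes X :: "real^'d^'m"
  assumes row: "\<And>i. (\<Sum>j\<in>UNIV. W $ i $ j) = 1"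
    and col: "\<And>j. (\<Sum>i\<in>UNIV. W $ i $ j) = 1"
    and nn: "\<And>i j. W $ i $ j \<ge> 0"
  shows "norm (Wm W X) \<le> norm X"
proof (rule power2_le_imp_le)
  have row_le: "(norm (Wm W X $ i))^2 \<le> (\<Sum>j\<in>UNIV. W $ i $ j * (norm (X $ j))^2)" for i
  proof -
    have "norm (Wm W X $ i) \<le> (\<Sum>j\<in>UNIV. norm (W $ i $ j *\<^sub>R X $ j))"
      unfolding Wm_def vec_lambda_beta by (rule norm_sum)
    also have "\<dots> = (\<Sum>j\<in>UNIV. sqrt (W $ i $ j) * (sqrt (W $ i $ j) * norm (X $ j)))"
      using nn by (simp add: mult.assoc[symmetric])
    finally have a: "norm (Wm W X $ i) \<le> \<dots>" .
    have "(norm (Wm W X $ i))^2 \<le> (\<Sum>j\<in>UNIV. sqrt (W $ i $ j) * (sqrt (W $ i $ j) * norm (X $ j)))^2"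
      by (rule power_mono[OF a]) simp
    also have "\<dots> \<le> (\<Sum>j\<in>UNIV. (sqrt (W $ i $ j))^2) * (\<Sum>j\<in>UNIV. (sqrt (W $ i $ j) * norm (X $ j))^2)"
      by (rule Cauchy_Schwarz_ineq_sum)
    also have "\<dots> = (\<Sum>j\<in>UNIV. W $ i $ j * (norm (X $ j))^2)"
      using nn row[of i] by (simp add: power_mult_distrib)
    finally show ?thesis .
  qed
  have "(norm (Wm W X))^2 = (\<Sum>i\<in>UNIV. (norm (Wm W X $ i))^2)" by (rule norm_sq_vec)
  also have "\<dots> \<le> (\<Sum>i\<in>UNIV. \<Sum>j\<in>UNIV. W $ i $ j * (norm (X $ j))^2)" by (rule sum_mono[OF row_le])
  also have "\<dots> = (\<Sum>j\<in>UNIV. \<Sum>i\<in>UNIV. W $ i $ j * (norm (X $ j))^2)" by (rule sum.swap)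
  also have "\<dots> = (\<Sum>j\<in>UNIV. (norm (X $ j))^2)" by (simp add: sum_distrib_right[symmetric] col)
  also have "\<dots> = (norm X)^2" by (rule norm_sq_vec[symmetric])
  finally show "(norm (Wm W X))^2 \<le> (norm X)^2" .
qed simp

theorem proposition3p5:
  fixes K Oset :: "(real^'d::finite) set"
    and f :: "'m::finite \<Rightarrow> real^'d \<Rightarrow> real"
    and gf :: "'m \<Rightarrow> real^'d \<Rightarrow> real^'d"
    and Hf :: "'m \<Rightarrow> real^'d \<Rightarrow> real^'d \<Rightarrow> real^'d"
    and G :: "real^'d \<Rightarrow> real"
    and \<mu> L :: real and Li :: "'m \<Rightarrow> real"
    and E :: "('m \<times> 'm) set"
    and W :: "real^'m^'m"
    and ft :: "'m \<Rightarrow> real^'d \<Rightarrow> real^'d \<Rightarrow> real"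
    and gft :: "'m \<Rightarrow> real^'d \<Rightarrow> real^'d \<Rightarrow> real^'d"
    and \<alpha> :: real
    and x y xhat :: "nat \<Rightarrow> real^'d^'m"
  assumes
    \<comment> \<open>(A)\<close>
    K_ne: "K \<noteq> {}" and K_closed: "closed K" and K_convex: "convex K"
    and O_open: "open Oset" and KO: "K \<subseteq> Oset"
    and f_grad: "\<And>i z. z \<in> Oset \<Longrightarrow> (f i has_derivative (\<lambda>h. gf i z \<bullet> h)) (at z)"
    and f_hess: "\<And>i z. z \<in> Oset \<Longrightarrow> (gf i has_derivative Hf i z) (at z)"
    and f_convex: "\<And>i. convex_on Oset (f i)"
    and mu_pos: "\<mu> > 0"
    and F_hess_lower: "\<And>z v. z \<in> K \<Longrightarrow>
        \<mu> * (v \<bullet> v) \<le> v \<bullet> ((1 / real CARD('m)) *\<^sub>R (\<Sum>i\<in>UNIV. Hf i z v))"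
    and F_hess_upper: "\<And>z v. z \<in> K \<Longrightarrow>
        v \<bullet> ((1 / real CARD('m)) *\<^sub>R (\<Sum>i\<in>UNIV. Hf i z v)) \<le> L * (v \<bullet> v)"
    and G_convex: "convex_on K G"
    and fi_hess_upper: "\<And>i z v. z \<in> K \<Longrightarrow> v \<bullet> Hf i z v \<le> Li i * (v \<bullet> v)"
    \<comment> \<open>(B)\<close>
    and E_sym: "\<And>i j. (i, j) \<in> E \<Longrightarrow> (j, i) \<in> E"
    and E_irrefl: "\<And>i. (i, i) \<notin> E"
    and E_connected: "\<And>i j. (i, j) \<in> E\<^sup>*"
    \<comment> \<open>(W)\<close>
    and W_diag: "\<And>i. W $ i $ i > 0"
    and W_edge: "\<And>i j. i \<noteq> j \<Longrightarrow> (W $ i $ j > 0 \<longleftrightarrow> (i, j) \<in> E)"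
    and W_nonedge: "\<And>i j. i \<noteq> j \<Longrightarrow> (i, j) \<notin> E \<Longrightarrow> W $ i $ j = 0"
    and W_row: "\<And>i. (\<Sum>j\<in>UNIV. W $ i $ j) = 1"
    and W_col: "\<And>j. (\<Sum>i\<in>UNIV. W $ i $ j) = 1"
    \<comment> \<open>(C)\<close>
    and ft_C2: "\<And>i. C2_on (\<lambda>p. ft i (fst p) (snd p)) (Oset \<times> Oset)"
    and ft_grad: "\<And>i u z. u \<in> Oset \<Longrightarrow> z \<in> Oset \<Longrightarrow>
        ((\<lambda>w. ft i w z) has_derivative (\<lambda>h. gft i u z \<bullet> h)) (at u)"
    and ft_consistent: "\<And>i z. z \<in> K \<Longrightarrow> gft i z z = gf i z"
    and ft_lipschitz: "\<And>i z. z \<in> K \<Longrightarrow> \<exists>C. C-lipschitz_on K (\<lambda>u. gft i u z)"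
    and ft_strongly_convex: "\<And>i z. z \<in> K \<Longrightarrow> strongly_convex_on K (\<lambda>u. ft i u z)"
    \<comment> \<open>step size\<close>
    and alpha: "0 < \<alpha>" "\<alpha> \<le> 1"
    \<comment> \<open>SONATA iterates\<close>
    and x0: "\<And>i. x 0 $ i \<in> K"
    and y0: "\<And>i. y 0 $ i = gf i (x 0 $ i)"
    and xhat_in: "\<And>\<nu> i. xhat \<nu> $ i \<in> K"
    and xhat_min: "\<And>\<nu> i u. u \<in> K \<Longrightarrow>
        ft i (xhat \<nu> $ i) (x \<nu> $ i) + (y \<nu> $ i - gf i (x \<nu> $ i)) \<bullet> (xhat \<nu> $ i - x \<nu> $ i) + G (xhat \<nu> $ i)
        \<le> ft i u (x \<nu> $ i) + (y \<nu> $ i - gf i (x \<nu> $ i)) \<bullet> (u - x \<nu> $ i) + G u"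
    and x_step: "\<And>\<nu> i. x (Suc \<nu>) $ i =
        (\<Sum>j\<in>UNIV. W $ i $ j *\<^sub>R (x \<nu> $ j + \<alpha> *\<^sub>R (xhat \<nu> $ j - x \<nu> $ j)))"
    and y_step: "\<And>\<nu> i. y (Suc \<nu>) $ i =
        (\<Sum>j\<in>UNIV. W $ i $ j *\<^sub>R (y \<nu> $ j + gf j (x (Suc \<nu>) $ j) - gf j (x \<nu> $ j)))"
  shows "norm (perp (x (Suc \<nu>))) \<le>
           largest_singular_value (consensus_map W :: real^'d^'m \<Rightarrow> real^'d^'m) * norm (perp (x \<nu>))
           + \<alpha> * largest_singular_value (consensus_map W :: real^'d^'m \<Rightarrow> real^'d^'m) * norm (xhat \<nu> - x \<nu>)
       \<and> norm (perp (y (Suc \<nu>))) \<le>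
           largest_singular_value (consensus_map W :: real^'d^'m \<Rightarrow> real^'d^'m) * norm (perp (y \<nu>))
           + 2 * Max (range Li) * largest_singular_value (consensus_map W :: real^'d^'m \<Rightarrow> real^'d^'m) * norm (perp (x \<nu>))
           + \<alpha> * Max (range Li) * largest_singular_value (consensus_map W :: real^'d^'m \<Rightarrow> real^'d^'m) * norm (xhat \<nu> - x \<nu>)"
proof -
  let ?\<rho> = "largest_singular_value (consensus_map W :: real^'d^'m \<Rightarrow> real^'d^'m)"
  let ?Lm = "Max (range Li)"
  have Wnn: "0 \<le> W $ i $ j" for i j
  proof (cases "i = j")
    case True then show ?thesis using W_diag[of i] by simp
  next
    case False then show ?thesis using W_edge[of i j] W_nonedge[of i j] by (cases "(i, j) \<in> E") auto
  qed
  have xK: "x n $ i \<in> K" for n i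
  proof (induction n arbitrary: i)
    case 0 then show ?case by (rule x0)
  next
    case (Suc n)
    have p: "x n $ j + \<alpha> *\<^sub>R (xhat n $ j - x n $ j) \<in> K" for j
    proof -
      have "(1 - \<alpha>) *\<^sub>R x n $ j + \<alpha> *\<^sub>R xhat n $ j \<in> K"
        using convexD[OF K_convex Suc.IH[of j] xhat_in[of n j], of "1 - \<alpha>" \<alpha>] alpha by simp
      then show ?thesis by (simp add: algebra_simps)
    qed
    show ?case unfolding x_step
      by (rule convex_sum[OF finite[of UNIV] K_convex W_row]) (use Wnn p in auto)
  qed
  have Lip: "norm (gf j a - gf j b) \<le> Li j * norm (a - b)" and Li0: "0 \<le> Li j"
    if "a \<in> K" "b \<in> K" for j a b
  proof -
    have ob: "onorm (Hf j z) \<le> Li j" if z: "z \<in> K" for z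
      by (rule hess_onorm[OF f_convex O_open _ f_grad f_hess fi_hess_upper[OF z]]) (use z KO in auto)
    show "norm (gf j a - gf j b) \<le> Li j * norm (a - b)"
    proof (rule differentiable_bound[OF K_convex _ ob that])
      fix z assume "z \<in> K"
      then show "(gf j has_derivative Hf j z) (at z within K)"
        using KO f_hess by (auto intro: has_derivative_at_withinI)
    qed
    have "bounded_linear (Hf j a)" using f_hess[of a j] KO that by (auto intro: has_derivative_bounded_linear)
    then show "0 \<le> Li j" using onorm_pos_le ob[OF that(1)] by (meson order_trans)
  qed
  have LiM: "Li j \<le> ?Lm" for j by (rule Max_ge) auto
  have Lm0: "0 \<le> ?Lm" using Li0[OF x0 x0] LiM by (meson order_trans)
  have vext: "\<And>A B :: real^'d^'m. (\<And>i. A $ i = B $ i) \<Longrightarrow> A = B" by (simp add: vec_eq_iff)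
  define d where "d = xhat \<nu> - x \<nu>"
  define P where "P = perp (x \<nu>)"
  define Cx :: "real^'d^'m" where "Cx = (\<chi> i. stack_avg (x \<nu>))"
  have xs: "x (Suc \<nu>) = Wm W (x \<nu> + \<alpha> *\<^sub>R d)"
    by (rule vext) (simp add: Wm_def x_step d_def)
  have xdec: "x \<nu> = P + Cx" by (rule vext) (simp add: P_def Cx_def perp_def)
  have linW: "linear (Wm W :: real^'d^'m \<Rightarrow> real^'d^'m)" by (rule linear_Wm)
  have linC: "linear (consensus_map W :: real^'d^'m \<Rightarrow> real^'d^'m)" by (rule linear_consensus)
  have part1: "perp (x (Suc \<nu>)) = consensus_map W P + \<alpha> *\<^sub>R consensus_map W d"
    unfolding xs perp_Wm[OF W_col] P_def
    by (simp add: linear_add[OF linC] linear_cmul[OF linC] consensus_perp[OF W_row])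
  have n1: "norm (perp (x (Suc \<nu>))) \<le> ?\<rho> * norm P + \<alpha> * ?\<rho> * norm d"
  proof -
    have "norm (perp (x (Suc \<nu>))) \<le> norm (consensus_map W P) + norm (\<alpha> *\<^sub>R consensus_map W d)"
      unfolding part1 by (rule norm_triangle_ineq)
    also have "\<dots> \<le> ?\<rho> * norm P + \<alpha> * (?\<rho> * norm d)"
      using consensus_norm[of W P] consensus_norm[of W d] alpha
      by (intro add_mono) (auto intro: mult_left_mono)
    finally show ?thesis by (simp add: mult.assoc)
  qed
  have dx: "norm (x (Suc \<nu>) - x \<nu>) \<le> 2 * norm P + \<alpha> * norm d"
  proof -
    have "Wm W Cx = Cx" unfolding Cx_def by (rule Wm_const[OF W_row])
    then have "x (Suc \<nu>) - x \<nu> = (Wm W P - P) + \<alpha> *\<^sub>R Wm W d"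
      unfolding xs by (subst (2) xdec, subst xdec) (simp add: linear_add[OF linW] linear_cmul[OF linW])
    then have "norm (x (Suc \<nu>) - x \<nu>) \<le> norm (Wm W P) + norm P + \<alpha> * norm (Wm W d)"
      using alpha norm_triangle_ineq[of "Wm W P - P" "\<alpha> *\<^sub>R Wm W d"] norm_triangle_ineq4[of "Wm W P" P]
      by simp
    also have "\<dots> \<le> norm P + norm P + \<alpha> * norm d"
      using Wm_norm[OF W_row W_col Wnn, of P] Wm_norm[OF W_row W_col Wnn, of d] alpha
      by (intro add_mono mult_left_mono) auto
    finally show ?thesis by simp
  qed
  define Dg :: "real^'d^'m" where "Dg = (\<chi> j. gf j (x (Suc \<nu>) $ j) - gf j (x \<nu> $ j))"
  have ys: "y (Suc \<nu>) = Wm W (y \<nu> + Dg)"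
    by (rule vext) (simp add: Wm_def y_step Dg_def algebra_simps)
  have nDg: "norm Dg \<le> ?Lm * norm (x (Suc \<nu>) - x \<nu>)"
  proof (rule norm_vec_comp_le[OF _ Lm0])
    fix j
    have "norm (Dg $ j) \<le> Li j * norm (x (Suc \<nu>) $ j - x \<nu> $ j)"
      unfolding Dg_def by (simp add: Lip xK)
    also have "\<dots> \<le> ?Lm * norm (x (Suc \<nu>) $ j - x \<nu> $ j)" by (rule mult_right_mono[OF LiM]) simp
    finally show "norm (Dg $ j) \<le> ?Lm * norm ((x (Suc \<nu>) - x \<nu>) $ j)" by simp
  qed
  have part2: "perp (y (Suc \<nu>)) = consensus_map W (perp (y \<nu>)) + consensus_map W Dg"
    unfolding ys perp_Wm[OF W_col]
    by (simp add: linear_add[OF linC] consensus_perp[OF W_row])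
  have n2: "norm (perp (y (Suc \<nu>))) \<le> ?\<rho> * norm (perp (y \<nu>)) + ?\<rho> * norm Dg"
    unfolding part2 using consensus_norm[of W "perp (y \<nu>)"] consensus_norm[of W Dg]
      norm_triangle_ineq[of "consensus_map W (perp (y \<nu>))" "consensus_map W Dg"] by linarith
  have "?\<rho> * norm Dg \<le> ?\<rho> * (?Lm * (2 * norm P + \<alpha> * norm d))"
    using nDg dx rho_nonneg[of W] Lm0 by (meson mult_left_mono order_trans)
  then have n3: "norm (perp (y (Suc \<nu>))) \<le> ?\<rho> * norm (perp (y \<nu>)) + 2 * ?Lm * ?\<rho> * norm P + \<alpha> * ?Lm * ?\<rho> * norm d"
    using n2 by (simp add: algebra_simps)
  show ?thesis using n1 n3 by (simp add: P_def d_def)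
qed
end
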